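(* Let $\bm{H}_1,\dots,\bm{H}_N$ be random matrices with values in $\mathbb{C}^{N_R\times N_T}$ (sub-channels of a frequency-selective MIMO channel), let $\bm{\mathcal{H}}=\operatorname{diag}(\bm{H}_1,\dots,\bm{H}_N)$ be the block diagonal matrix, let $\lambda^i_{\max}$ be the maximum eigenvalue of $\bm{H}_i\bm{H}_i^\ast$ and $\lambda_{\max}$ the maximum eigenvalue of $\bm{\mathcal{H}}\bm{\mathcal{H}}^\ast$. Let $W,\rho>0$. Consider the capacity with channel side information known at the transmitter $$c=\frac{W}{N}\max_{\bm{R}\succeq 0,\ \operatorname{Tr}[\bm{R}]=N_TN}\log_2\det\Big(\bm{I}_{N_RN}+\frac{\rho}{N_T}\bm{\mathcal{H}}\bm{R}\bm{\mathcal{H}}^\ast\Big)$$ (maximum over Hermitian positive semidefinite $\bm{R}$ of size $N_TN$), and the capacity with channel side information unknown at the transmitter $$c=\frac{W}{N}\sum_{i=1}^N\log_2\det\Big(\bm{I}_{N_R}+\frac{\rho}{N_T}\bm{H}_i\bm{H}_i^\ast\Big).$$ The condition "for every $i\in\{1,\dots,N\}$, $\mathbb{E}[(1+\lambda^i_{\max})^\theta]<\infty$ for some $\theta>0$" is equivalent to the condition "$\mathbb{E}[(1+\lambda_{\max})^\theta]<\infty$ for some $\theta>0$", and if it holds then the distribution of the capacity (in either case) is light-tailed.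
   Context: A nonnegative random variable $X$ is light-tailed if $\Pr(X>x)=O(e^{-\theta x})$ for some $\theta>0$, equivalently $\mathbb{E}[e^{\theta X}]<\infty$ for some $\theta>0$. $W$ is the bandwidth, $N$ the number of sub-channels, $\rho=P/(N_0W)$. *)

theory Defs
  imports "HOL-Analysis.Analysis" "HOL-Probability.Probability" "HOL-Library.Landau_Symbols"
begin

definition cadj :: "complex^'n::finite^'m::finite \<Rightarrow> complex^'m^'n" where
  "cadj A = (\<chi> i j. cnj (A $ j $ i))"

text \<open>Block diagonal matrix diag(H_1,...,H_N); blocks indexed by the finite type 'n (N = CARD('n)).\<close>
definition block_diag :: "('n::finite \<Rightarrow> complex^'t::finite^'r::finite) \<Rightarrow> complex^('t \<times> 'n)^('r \<times> 'n)" where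
  "block_diag H = (\<chi> ri tj. if snd ri = snd tj then H (snd ri) $ fst ri $ fst tj else 0)"

definition lambda_max :: "complex^'n::finite^'n \<Rightarrow> real" where
  "lambda_max A = Max {l::real. \<exists>v. v \<noteq> 0 \<and> A *v v = complex_of_real l *s v}"

definition psd_herm :: "complex^'n::finite^'n \<Rightarrow> bool" where
  "psd_herm R \<longleftrightarrow> cadj R = R \<and>
     (\<forall>x. 0 \<le> Re (\<Sum>i\<in>UNIV. cnj (x $ i) * (R *v x) $ i))"

text \<open>Capacity with CSI known at the transmitter (maximum written as supremum; it is attained).\<close>
definition cap_known :: "real \<Rightarrow> real \<Rightarrow> ('n::finite \<Rightarrow> complex^'t::finite^'r::finite) \<Rightarrow> real" where
  "cap_known W \<rho> H = W / real CARD('n) *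
     (SUP R \<in> {R :: complex^('t \<times> 'n)^('t \<times> 'n). psd_herm R \<and> trace R = of_nat (CARD('t) * CARD('n))}.
        log 2 (Re (det (mat 1 + (\<rho> / real CARD('t)) *\<^sub>R (block_diag H ** R ** cadj (block_diag H))))))"

definition cap_unknown :: "real \<Rightarrow> real \<Rightarrow> ('n::finite \<Rightarrow> complex^'t::finite^'r::finite) \<Rightarrow> real" where
  "cap_unknown W \<rho> H = W / real CARD('n) *
     (\<Sum>i\<in>UNIV. log 2 (Re (det (mat 1 + (\<rho> / real CARD('t)) *\<^sub>R (H i ** cadj (H i))))))"

definition light_tailed :: "'a measure \<Rightarrow> ('a \<Rightarrow> real) \<Rightarrow> bool" where
  "light_tailed M X \<longleftrightarrow> X \<in> borel_measurable M \<and>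
     (\<exists>\<theta>>0. (\<lambda>x. measure M {\<omega> \<in> space M. X \<omega> > x}) \<in> O[at_top](\<lambda>x. exp (- \<theta> * x)))"

end

theory Submission
  imports Defs
begin


definition cdot :: "complex^'n::finite \<Rightarrow> complex^'n \<Rightarrow> complex" where
  "cdot x y = (\<Sum>i\<in>UNIV. cnj (x$i) * y$i)"

lemma cdot_adj: "cdot x (A *v y) = cdot (cadj A *v x) y"
proof -
  have "cdot x (A *v y) = (\<Sum>i\<in>UNIV. \<Sum>j\<in>UNIV. cnj (x$i) * A$i$j * y$j)"
    unfolding cdot_def matrix_vector_mult_def by (simp add: sum_distrib_left mult.assoc)
  also have "\<dots> = (\<Sum>j\<in>UNIV. \<Sum>i\<in>UNIV. cnj (x$i) * A$i$j * y$j)"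
    by (rule sum.swap)
  also have "\<dots> = cdot (cadj A *v x) y"
    unfolding cdot_def matrix_vector_mult_def cadj_def by (simp add: sum_distrib_left mult_ac)
  finally show ?thesis .
qed

lemma cdot_cnj: "cnj (cdot x y) = cdot y x"
  unfolding cdot_def by (simp add: cnj_sum mult.commute)

lemma norm_sq_vec: "(norm (x::complex^'n::finite))^2 = (\<Sum>i\<in>UNIV. (cmod (x$i))^2)"
  unfolding norm_vec_def L2_set_def by (simp add: sum_nonneg)

lemma cdot_self: "cdot x x = complex_of_real ((norm x)^2)"
  unfolding cdot_def norm_sq_vec
  by (simp add: of_real_sum mult.commute flip: complex_norm_square)

lemma Re_cdot_self: "Re (cdot x x) = (norm x)^2"
  by (simp add: cdot_self)

lemma cdot_add_right: "cdot x (y + z) = cdot x y + cdot x z"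
  unfolding cdot_def by (simp add: distrib_left sum.distrib)
lemma cdot_add_left: "cdot (x + y) z = cdot x z + cdot y z"
  unfolding cdot_def by (simp add: distrib_right sum.distrib)
lemma cdot_diff_right: "cdot x (y - z) = cdot x y - cdot x z"
  unfolding cdot_def by (simp add: right_diff_distrib sum_subtractf)
lemma cdot_scale_right: "cdot x (c *s y) = c * cdot x y"
  unfolding cdot_def by (simp add: sum_distrib_left mult_ac)
lemma cdot_scale_left: "cdot (c *s x) y = cnj c * cdot x y"
  unfolding cdot_def by (simp add: sum_distrib_left mult_ac)

lemma cadj_cadj[simp]: "cadj (cadj A) = A"
  unfolding cadj_def by (simp add: vec_eq_iff)

lemma cadj_mult: "cadj (A ** B) = cadj B ** cadj A"
  unfolding cadj_def matrix_matrix_mult_def by (simp add: vec_eq_iff cnj_sum mult.commute)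

lemma cadj_mat1[simp]: "cadj (mat 1 :: complex^'n::finite^'n) = mat 1"
  unfolding cadj_def mat_def by (simp add: vec_eq_iff)

lemma cadj_add: "cadj (A + B) = cadj A + cadj B"
  unfolding cadj_def by (simp add: vec_eq_iff)

lemma cadj_scaleR: "cadj (c *\<^sub>R A) = c *\<^sub>R cadj A"
  unfolding cadj_def by (simp add: vec_eq_iff)

lemma herm_cdot: "cadj A = A \<Longrightarrow> cdot x (A *v y) = cdot (A *v x) y"
  by (metis cdot_adj)

lemma herm_Q_real: assumes "cadj A = A" shows "complex_of_real (Re (cdot x (A *v x))) = cdot x (A *v x)"
proof -
  have "cnj (cdot x (A *v x)) = cdot x (A *v x)"
    by (metis assms cdot_cnj herm_cdot)
  then show ?thesis using Reals_cnj_iff complex_is_Real_iff by (metis Reals_cases of_real_Re)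
qed



lemma mv_scaleR: "A *v (r *\<^sub>R x) = r *\<^sub>R (A *v (x::complex^'n::finite))"
  by (simp add: matrix_vector_mult_def vec_eq_iff scaleR_sum_right mult_ac)
lemma mv_scale: "A *v (c *s x) = c *s (A *v (x::complex^'n::finite))"
  by (simp add: matrix_vector_mult_def vec_eq_iff sum_distrib_left mult_ac)
lemma cdot_scaleR_left: "cdot (r *\<^sub>R x) y = of_real r * cdot x y"
  unfolding cdot_def vector_scaleR_component by (simp add: sum_distrib_left scaleR_conv_of_real mult_ac)
lemma cdot_scaleR_right: "cdot x (r *\<^sub>R y) = of_real r * cdot x y"
  unfolding cdot_def vector_scaleR_component by (simp add: sum_distrib_left scaleR_conv_of_real mult_ac)
lemma cdot_zero_left[simp]: "cdot 0 y = 0" unfolding cdot_def by simp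
lemma inner_cdot: "inner x y = Re (cdot x (y::complex^'n::finite))"
  unfolding cdot_def inner_vec_def inner_complex_def by simp

lemma continuous_Q: "continuous_on UNIV (\<lambda>x. Re (cdot x (A *v (x::complex^'n::finite))))"
  unfolding cdot_def matrix_vector_mult_def by (intro continuous_intros)

lemma quad_nonpos_lin_zero:
  fixes a b :: real
  assumes "\<And>t. 2*t*b + t^2*a \<le> 0" shows "b = 0"
proof (rule ccontr)
  assume "b \<noteq> 0"
  define c where "c = \<bar>a\<bar>+1"
  define t where "t = b / c"
  have h: "2*t*b + t^2*a \<le> 0" by (rule assms)
  have pos: "c > 0" unfolding c_def by simp
  have "2*t*b + t^2*a = b^2 * (2*c + a) / c^2"
    unfolding t_def using pos by (simp add: field_simps power2_eq_square)
  moreover have "2*c+a > 0" unfolding c_def by (cases "a \<ge> 0") auto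
  moreover have "b^2 * (2*c + a) / c^2 > 0"
    using \<open>b \<noteq> 0\<close> pos calculation(2) by (intro divide_pos_pos mult_pos_pos) auto
  ultimately show False using h by simp
qed

lemma herm_max:
  fixes A :: "complex^'n::finite^'n"
  assumes h: "cadj A = A"
  shows "(\<forall>x. Re (cdot x (A *v x)) \<le> lambda_max A * (norm x)^2) \<and>
         (\<exists>v. v \<noteq> 0 \<and> A *v v = complex_of_real (lambda_max A) *s v)"
proof -
  define f where "f = (\<lambda>x::complex^'n. Re (cdot x (A *v x)))"
  have "sphere (0::complex^'n) 1 \<noteq> {}" by simp
  then obtain x0 where x0: "x0 \<in> sphere 0 1" and mx: "\<And>y. y \<in> sphere 0 1 \<Longrightarrow> f y \<le> f x0"
    using continuous_attains_sup[OF compact_sphere _ continuous_on_subset[OF continuous_Q subset_UNIV], of 0 1 A]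
    unfolding f_def by blast
  define \<mu> where "\<mu> = f x0"
  have nx0: "norm x0 = 1" using x0 by simp
  have bound: "f x \<le> \<mu> * (norm x)^2" for x
  proof (cases "x = 0")
    case True then show ?thesis by (simp add: f_def)
  next
    case False
    define u where "u = (1 / norm x) *\<^sub>R x"
    have "norm u = 1" using False by (simp add: u_def)
    then have "f u \<le> \<mu>" using mx unfolding \<mu>_def by simp
    moreover have "f u = (1/norm x)^2 * f x"
      unfolding f_def u_def mv_scaleR cdot_scaleR_left cdot_scaleR_right
      by (simp add: power2_eq_square)
    ultimately have "(1/norm x)^2 * f x \<le> \<mu>" by simp
    then show ?thesis using False by (simp add: field_simps)
  qed
  define w where "w = A *v x0 - complex_of_real \<mu> *s x0"
  have lin: "Re (cdot y w) = 0" for y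
  proof -
    define a where "a = f y - \<mu> * (norm y)^2"
    define b where "b = Re (cdot y w)"
    have "2*t*b + t^2*a \<le> 0" for t
    proof -
      have e1: "f (x0 + t *\<^sub>R y) = f x0 + 2*t*Re (cdot y (A *v x0)) + t^2 * f y"
      proof -
        have "cdot x0 (A *v y) = cnj (cdot y (A *v x0))"
          by (metis cdot_cnj h herm_cdot)
        then show ?thesis
          unfolding f_def matrix_vector_right_distrib mv_scaleR cdot_add_left cdot_add_right
            cdot_scaleR_left cdot_scaleR_right
          by (simp add: power2_eq_square algebra_simps)
      qed
      have e2: "(norm (x0 + t *\<^sub>R y))^2 = 1 + 2*t*Re (cdot y x0) + t^2 * (norm y)^2"
      proof -
        have "cdot x0 y = cnj (cdot y x0)" by (simp add: cdot_cnj)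
        then show ?thesis
          unfolding Re_cdot_self[symmetric] cdot_add_left cdot_add_right
            cdot_scaleR_left cdot_scaleR_right
          using nx0 Re_cdot_self[of x0]
          by (simp add: power2_eq_square algebra_simps)
      qed
      have beq: "b = Re (cdot y (A *v x0)) - \<mu> * Re (cdot y x0)"
        unfolding b_def w_def cdot_diff_right cdot_scale_right by simp
      have "2*t*b + t^2*a = f (x0 + t *\<^sub>R y) - \<mu> * (norm (x0 + t *\<^sub>R y))^2"
        unfolding beq e1 e2 a_def \<mu>_def by (simp add: algebra_simps)
      also have "\<dots> \<le> 0" using bound[of "x0 + t *\<^sub>R y"] by simp
      finally show ?thesis .
    qed
    then show ?thesis unfolding b_def[symmetric] by (rule quad_nonpos_lin_zero)
  qed
  have "w = 0" using lin[of w] Re_cdot_self[of w] by simp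
  then have eig: "A *v x0 = complex_of_real \<mu> *s x0" unfolding w_def by simp
  have x0nz: "x0 \<noteq> 0" using nx0 by auto
  define S where "S = {l::real. \<exists>v. v \<noteq> 0 \<and> A *v v = complex_of_real l *s v}"
  have muS: "\<mu> \<in> S" unfolding S_def using eig x0nz by blast
  have leS: "l \<le> \<mu>" if lS: "l \<in> S" for l
  proof -
    obtain v where v: "v \<noteq> 0" "A *v v = complex_of_real l *s v" using lS unfolding S_def by auto
    have "f v = l * (norm v)^2" unfolding f_def v(2) cdot_scale_right
      by (simp add: cdot_self)
    then have "l * (norm v)^2 \<le> \<mu> * (norm v)^2" using bound[of v] by simp
    moreover have "(norm v)^2 > 0" using v(1) by simp
    ultimately show ?thesis by simp
  qed
  have finS: "finite S"
  proof -
    define ev where "ev l = (SOME v. v \<noteq> 0 \<and> A *v v = complex_of_real l *s v)" for l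
    have evp: "ev l \<noteq> 0 \<and> A *v ev l = complex_of_real l *s ev l" if "l \<in> S" for l
      unfolding ev_def
      by (rule someI_ex[where P="\<lambda>v. v \<noteq> 0 \<and> A *v v = complex_of_real l *s v"]) (use that in \<open>simp add: S_def\<close>)
    have inj: "inj_on ev S"
    proof (rule inj_onI)
      fix l l' assume "l \<in> S" "l' \<in> S" "ev l = ev l'"
      then have "complex_of_real l *s ev l = complex_of_real l' *s ev l" using evp by metis
      then have eq: "complex_of_real l * ev l $ i = complex_of_real l' * ev l $ i" for i
        by (metis vector_smult_component)
      obtain i where "ev l $ i \<noteq> 0" using evp[OF \<open>l \<in> S\<close>] by (metis vec_eq_iff zero_index)
      then show "l = l'" using eq[of i] by simp
    qed
    have orth: "pairwise orthogonal (ev ` S)"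
    proof (rule pairwiseI)
      fix x y assume xy: "x \<in> ev ` S" "y \<in> ev ` S" "x \<noteq> y"
      then obtain l l' where ll: "l \<in> S" "l' \<in> S" "x = ev l" "y = ev l'" by blast
      then have "l \<noteq> l'" using xy by auto
      have "cdot x (A *v y) = complex_of_real l' * cdot x y"
        using evp[OF ll(2)] ll by (simp add: cdot_scale_right)
      moreover have "cdot (A *v x) y = complex_of_real l * cdot x y"
        using evp[OF ll(1)] ll by (simp add: cdot_scale_left)
      ultimately have "(complex_of_real l - complex_of_real l') * cdot x y = 0"
        using herm_cdot[OF h, of x y] by (simp add: algebra_simps)
      then have "cdot x y = 0" using \<open>l \<noteq> l'\<close> by simp
      then show "orthogonal x y" unfolding orthogonal_def inner_cdot by simp
    qed
    have "0 \<notin> ev ` S" using evp by auto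
    then have "finite (ev ` S)"
      using pairwise_orthogonal_independent[OF orth] finiteI_independent by blast
    then show ?thesis using inj finite_imageD by blast
  qed
  have lm: "lambda_max A = \<mu>"
    unfolding lambda_max_def S_def[symmetric]
    using finS muS leS by (intro Max_eqI) auto
  show ?thesis using bound eig x0nz unfolding lm f_def by blast
qed



lemma gram_herm: "cadj (A ** cadj A) = A ** cadj (A::complex^'c::finite^'r::finite)"
  by (simp add: cadj_mult)

lemma gram_Q: "Re (cdot x ((A ** cadj A) *v x)) = (norm (cadj A *v x))^2"
proof -
  have "cdot x ((A ** cadj A) *v x) = cdot x (A *v (cadj A *v x))"
    by (simp add: matrix_vector_mul_assoc)
  also have "\<dots> = cdot (cadj A *v x) (cadj A *v x)" by (rule cdot_adj)
  finally show ?thesis by (simp add: Re_cdot_self)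
qed

lemma sum_single: "(\<And>j. j \<noteq> k \<Longrightarrow> g j = 0) \<Longrightarrow> (\<Sum>j\<in>(UNIV::'a::finite set). g j) = g k"
  by (subst sum.remove[of UNIV k]) (auto intro!: sum.neutral)

lemma gram_lmax:
  fixes A :: "complex^'c::finite^'r::finite"
  shows "(\<forall>x. (norm (cadj A *v x))^2 \<le> lambda_max (A ** cadj A) * (norm x)^2) \<and>
         (\<exists>v. v \<noteq> 0 \<and> (norm (cadj A *v v))^2 = lambda_max (A ** cadj A) * (norm v)^2)"
proof -
  note hm = herm_max[OF gram_herm[of A]]
  from hm obtain v where v: "v \<noteq> 0" "(A ** cadj A) *v v = complex_of_real (lambda_max (A ** cadj A)) *s v"
    by blast
  have "(norm (cadj A *v v))^2 = lambda_max (A ** cadj A) * (norm v)^2"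
    unfolding gram_Q[symmetric] v(2) cdot_scale_right by (simp add: cdot_self)
  then show ?thesis using hm v(1) unfolding gram_Q by metis
qed

lemma gram_lmax_nonneg: "0 \<le> lambda_max (A ** cadj (A::complex^'c::finite^'r::finite))"
proof -
  obtain v where v: "v \<noteq> 0" "(norm (cadj A *v v))^2 = lambda_max (A ** cadj A) * (norm v)^2"
    using gram_lmax[of A] by blast
  have "(norm v)^2 > 0" using v(1) by simp
  moreover have "lambda_max (A ** cadj A) * (norm v)^2 \<ge> 0" using v(2)[symmetric] by simp
  ultimately show ?thesis by (simp add: zero_le_mult_iff)
qed

lemma norm_sq_axis: "(norm (axis i (1::complex) :: complex^'n::finite))^2 = 1"
  unfolding norm_sq_vec by (subst sum_single[of i]) (auto simp: axis_def)

lemma entry_bound: "(cmod (A$i$j))^2 \<le> lambda_max (A ** cadj (A::complex^'c::finite^'r::finite))"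
proof -
  define e :: "complex^'r" where "e = axis i 1"
  have c: "(cadj A *v e) $ j = cnj (A$i$j)"
    unfolding e_def cadj_def matrix_vector_mult_def axis_def
    by (simp add: if_distrib cong: if_cong)
  have "(cmod (A$i$j))^2 = (cmod ((cadj A *v e) $ j))^2" using c by simp
  also have "\<dots> \<le> (norm (cadj A *v e))^2"
    unfolding norm_sq_vec by (rule member_le_sum) auto
  also have "\<dots> \<le> lambda_max (A ** cadj A) * (norm e)^2" using gram_lmax[of A] by blast
  also have "\<dots> = lambda_max (A ** cadj A)" unfolding e_def norm_sq_axis by simp
  finally show ?thesis .
qed

definition blk :: "complex^('r::finite \<times> 'n::finite) \<Rightarrow> 'n \<Rightarrow> complex^'r" where
  "blk x k = (\<chi> r. x $ (r,k))"

lemma sum_pair: "(\<Sum>p\<in>(UNIV::('a::finite\<times>'b::finite) set). f p) = (\<Sum>k\<in>UNIV. \<Sum>r\<in>UNIV. f (r,k))"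
  by (subst sum.swap) (simp add: sum.cartesian_product flip: UNIV_Times_UNIV)

lemma bd_adj_mv: "(cadj (block_diag H) *v x) $ (t,k) = (cadj (H k) *v blk x k) $ t"
proof -
  have "(cadj (block_diag H) *v x) $ (t,k) =
        (\<Sum>k'\<in>UNIV. \<Sum>r\<in>UNIV. (if k' = k then cnj (H k $ r $ t) else 0) * x $ (r,k'))"
    unfolding cadj_def block_diag_def matrix_vector_mult_def
    by (simp add: sum_pair, intro sum.cong refl, auto)
  also have "\<dots> = (\<Sum>r\<in>UNIV. cnj (H k $ r $ t) * x $ (r,k))"
    by (subst sum_single[of k]) auto
  also have "\<dots> = (cadj (H k) *v blk x k) $ t"
    unfolding cadj_def blk_def matrix_vector_mult_def by simp
  finally show ?thesis .
qed

lemma norm_sq_blk: "(norm x)^2 = (\<Sum>k\<in>UNIV. (norm (blk x k))^2)"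
  unfolding norm_sq_vec blk_def by (simp add: sum_pair)

lemma norm_sq_bd_adj: "(norm (cadj (block_diag H) *v x))^2 = (\<Sum>k\<in>UNIV. (norm (cadj (H k) *v blk x k))^2)"
  unfolding norm_sq_vec by (simp add: sum_pair bd_adj_mv)

lemma lmax_block_ge:
  fixes H :: "'n::finite \<Rightarrow> complex^'t::finite^'r::finite"
  shows   "lambda_max (H k ** cadj (H k)) \<le> lambda_max (block_diag H ** cadj (block_diag H))"
proof -
  obtain v where v: "v \<noteq> 0" "(norm (cadj (H k) *v v))^2 = lambda_max (H k ** cadj (H k)) * (norm v)^2"
    using gram_lmax[of "H k"] by blast
  define x :: "complex^('r \<times> 'n)" where "x = (\<chi> p. if snd p = k then v $ fst p else 0)"
  have bx: "blk x k' = (if k' = k then v else 0)" for k'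
    unfolding blk_def x_def by (simp add: vec_eq_iff)
  have nx: "(norm x)^2 = (norm v)^2"
    unfolding norm_sq_blk bx by (subst sum_single[of k]) auto
  have nb: "(norm (cadj (block_diag H) *v x))^2 = (norm (cadj (H k) *v v))^2"
    unfolding norm_sq_bd_adj bx by (subst sum_single[of k]) auto
  have "lambda_max (H k ** cadj (H k)) * (norm v)^2 \<le> lambda_max (block_diag H ** cadj (block_diag H)) * (norm v)^2"
    using gram_lmax[of "block_diag H"] nx nb v(2) by metis
  moreover have "(norm v)^2 > 0" using v(1) by simp
  ultimately show ?thesis by simp
qed

lemma lmax_block_le:
  fixes H :: "'n::finite \<Rightarrow> complex^'t::finite^'r::finite"
  shows   "\<exists>k. lambda_max (block_diag H ** cadj (block_diag H)) \<le> lambda_max (H k ** cadj (H k))"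
proof -
  define l where "l k = lambda_max (H k ** cadj (H k))" for k
  define m where "m = Max (range l)"
  obtain v where v: "v \<noteq> 0" "(norm (cadj (block_diag H) *v v))^2 = lambda_max (block_diag H ** cadj (block_diag H)) * (norm v)^2"
    using gram_lmax[of "block_diag H"] by blast
  have "(norm (cadj (block_diag H) *v v))^2 = (\<Sum>k\<in>UNIV. (norm (cadj (H k) *v blk v k))^2)"
    by (rule norm_sq_bd_adj)
  also have "\<dots> \<le> (\<Sum>k\<in>UNIV. l k * (norm (blk v k))^2)"
    unfolding l_def using gram_lmax by (intro sum_mono) blast
  also have "\<dots> \<le> (\<Sum>k\<in>UNIV. m * (norm (blk v k))^2)"
    unfolding m_def by (intro sum_mono mult_right_mono) auto
  also have "\<dots> = m * (norm v)^2" unfolding norm_sq_blk by (simp add: sum_distrib_left)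
  finally have "lambda_max (block_diag H ** cadj (block_diag H)) * (norm v)^2 \<le> m * (norm v)^2"
    using v(2) by simp
  moreover have "(norm v)^2 > 0" using v(1) by simp
  ultimately have "lambda_max (block_diag H ** cadj (block_diag H)) \<le> m" by simp
  moreover have "m \<in> range l" unfolding m_def by (intro Max_in) auto
  ultimately show ?thesis unfolding l_def by auto
qed



lemma det_bound:
  fixes M :: "complex^'n::finite^'n"
  assumes b: "\<And>i j. cmod (M$i$j) \<le> K"
  shows "cmod (det M) \<le> fact CARD('n) * K ^ CARD('n)"
proof -
  let ?P = "{p. p permutes (UNIV::'n set)}"
  have K0: "0 \<le> K" using b[of undefined undefined] norm_ge_zero order_trans by blast
  have "cmod (det M) \<le> (\<Sum>p\<in>?P. cmod (of_int (sign p) * (\<Prod>i\<in>UNIV. M$i$p i)))"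
    unfolding det_def by (rule norm_sum)
  also have "\<dots> \<le> (\<Sum>p\<in>?P. K ^ CARD('n))"
  proof (rule sum_mono)
    fix p assume "p \<in> ?P"
    have s: "cmod (of_int (sign p)) = 1" by (simp add: sign_def)
    have s': "\<bar>real_of_int (sign p)\<bar> = 1" by (simp add: sign_def)
    have "cmod (of_int (sign p) * (\<Prod>i\<in>UNIV. M$i$p i)) = (\<Prod>i\<in>UNIV. cmod (M$i$p i))"
      by (simp add: norm_mult s s' prod_norm)
    also have "\<dots> \<le> (\<Prod>i\<in>(UNIV::'n set). K)" by (intro prod_mono) (simp add: b)
    finally show "cmod (of_int (sign p) * (\<Prod>i\<in>UNIV. M$i$p i)) \<le> K ^ CARD('n)" by simp
  qed
  also have "\<dots> = fact CARD('n) * K ^ CARD('n)"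
    using card_permutations[of "UNIV::'n set" "CARD('n)"] by simp
  finally show ?thesis .
qed

lemma det_cnj_entries: "det (\<chi> i j. cnj ((A::complex^'n::finite^'n)$i$j)) = cnj (det A)"
  unfolding det_def by simp

lemma det_cadj: "det (cadj (A::complex^'n::finite^'n)) = cnj (det A)"
proof -
  have "cadj A = transpose (\<chi> i j. cnj (A$i$j))"
    unfolding cadj_def transpose_def by (simp add: vec_eq_iff)
  then show ?thesis by (simp add: det_transpose det_cnj_entries)
qed

lemma det_herm_real: "cadj A = A \<Longrightarrow> Im (det (A::complex^'n::finite^'n)) = 0"
  using det_cadj[of A] by (metis cnj.simps(2) equation_minus_iff neg_equal_zero)

lemma mat_scaleR_mv: "(t *\<^sub>R P) *v x = t *\<^sub>R (P *v (x::complex^'n::finite))"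
  by (simp add: matrix_vector_mult_def vec_eq_iff scaleR_sum_right)

lemma det_I_plus_nz:
  fixes P :: "complex^'n::finite^'n"
  assumes psd: "\<And>x. 0 \<le> Re (cdot x (P *v x))" and t: "0 \<le> t"
  shows "det (mat 1 + t *\<^sub>R P) \<noteq> 0"
proof -
  have "x = 0" if "(mat 1 + t *\<^sub>R P) *v x = 0" for x
  proof -
    have "x + t *\<^sub>R (P *v x) = 0" using that
      by (simp add: matrix_vector_mult_add_rdistrib mat_scaleR_mv)
    then have "cdot x (x + t *\<^sub>R (P *v x)) = 0" by (simp add: cdot_def)
    then have "(norm x)^2 + t * Re (cdot x (P *v x)) = 0"
      unfolding cdot_add_right cdot_scaleR_right
    proof -
      assume "cdot x x + complex_of_real t * cdot x (P *v x) = 0"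
      then have "Re (cdot x x + complex_of_real t * cdot x (P *v x)) = 0" by simp
      then show ?thesis by (simp add: Re_cdot_self)
    qed
    moreover have "t * Re (cdot x (P *v x)) \<ge> 0" using psd t by simp
    ultimately have "(norm x)^2 = 0" by (smt (verit) zero_le_power2)
    then show ?thesis by simp
  qed
  then have "\<exists>B. B ** (mat 1 + t *\<^sub>R P) = mat 1"
    unfolding matrix_left_invertible_ker by blast
  then have "invertible (mat 1 + t *\<^sub>R P)" unfolding invertible_left_inverse .
  then show ?thesis unfolding invertible_det_nz .
qed

lemma det_I_plus_pos:
  fixes P :: "complex^'n::finite^'n"
  assumes h: "cadj P = P" and psd: "\<And>x. 0 \<le> Re (cdot x (P *v x))"
  shows "Re (det (mat 1 + P)) > 0"
proof (rule ccontr)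
  assume "\<not> ?thesis"
  then have n: "Re (det (mat 1 + 1 *\<^sub>R P)) \<le> 0" by simp
  define f where "f t = Re (det (mat 1 + t *\<^sub>R P))" for t
  have c: "continuous_on {0..1} f"
    unfolding f_def det_def by (intro continuous_intros)
  have f0: "f 0 = 1" unfolding f_def by simp
  obtain t where t: "0 \<le> t" "t \<le> 1" "f t = 0"
    using IVT2'[of f 1 0 0] c f0 n unfolding f_def by auto
  have hh: "cadj (mat 1 + t *\<^sub>R P) = mat 1 + t *\<^sub>R P" by (simp add: cadj_add cadj_scaleR h)
  have "det (mat 1 + t *\<^sub>R P) = 0"
    using t(3) det_herm_real[OF hh] unfolding f_def by (simp add: complex_eq_iff)
  then show False using det_I_plus_nz[OF psd t(1)] by simp
qed



lemma cdot_axis: "cdot (axis p 1) (R *v axis q 1) = R$p$(q::'n::finite)"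
proof -
  have "(R *v axis q 1) $ i = R$i$q" for i
    unfolding matrix_vector_mult_def axis_def by (subst sum_single[of q]) auto
  then show ?thesis unfolding cdot_def by (subst sum_single[of p]) (auto simp: axis_def)
qed

lemma psd_entry_bound:
  fixes R :: "complex^'n::finite^'n"
  assumes h: "cadj R = R" and psd: "\<And>x. 0 \<le> Re (cdot x (R *v x))"
  shows "Im (R$p$p) = 0" "0 \<le> Re (R$p$p)" "2 * cmod (R$p$q) \<le> Re (R$p$p) + Re (R$q$q)"
proof -
  have hpq: "R$q$p = cnj (R$p$q)" for p q using h unfolding cadj_def
    by (metis complex_cnj_cnj vec_lambda_beta)
  show "Im (R$p$p) = 0" using hpq[of p p] by (metis cnj.simps(2) equation_minus_iff neg_equal_zero)
  show "0 \<le> Re (R$p$p)" using psd[of "axis p 1"] by (simp add: cdot_axis)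
  show "2 * cmod (R$p$q) \<le> Re (R$p$p) + Re (R$q$q)"
  proof (cases "R$p$q = 0")
    case True
    then show ?thesis using psd[of "axis p 1"] psd[of "axis q 1"] by (simp add: cdot_axis)
  next
    case False
    define z where "z = R$p$q"
    define u where "u = - cnj z / complex_of_real (cmod z)"
    have zz: "cnj z * z = complex_of_real ((cmod z)^2)"
      by (metis complex_norm_square mult.commute)
    have r0: "complex_of_real (cmod z) \<noteq> 0" using False z_def by simp
    have uz: "u * z = - complex_of_real (cmod z)"
    proof -
      have "u * z = - (cnj z * z) / complex_of_real (cmod z)" unfolding u_def by simp
      also have "\<dots> = - complex_of_real (cmod z)" unfolding zz using r0
        by (simp add: power2_eq_square)
      finally show ?thesis .
    qed
    have cu: "cnj u * u = 1"
    proof -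
      have "cnj u * u = (cnj z * z) / (complex_of_real (cmod z) * complex_of_real (cmod z))"
        unfolding u_def by simp
      also have "\<dots> = 1" unfolding zz using r0 by (simp add: power2_eq_square)
      finally show ?thesis .
    qed
    define x where "x = axis p 1 + u *s axis q 1"
    have "cdot x (R *v x) = R$p$p + u * R$p$q + cnj u * R$q$p + cnj u * u * R$q$q"
      unfolding x_def matrix_vector_right_distrib mv_scale cdot_add_left cdot_add_right
        cdot_scale_left cdot_scale_right cdot_axis by (simp add: algebra_simps)
    also have "\<dots> = R$p$p + R$q$q + u * z + cnj (u * z)"
      using cu hpq[of p q] unfolding z_def by simp
    finally have "Re (cdot x (R *v x)) = Re (R$p$p) + Re (R$q$q) - 2 * cmod z"
      using uz by simp
    then show ?thesis using psd[of x] z_def by simp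
  qed
qed

lemma psd_trace_entry_bound:
  fixes R :: "complex^'n::finite^'n"
  assumes h: "cadj R = R" and psd: "\<And>x. 0 \<le> Re (cdot x (R *v x))" and tr: "trace R = of_real T"
  shows "cmod (R$p$q) \<le> T"
proof -
  have dle: "Re (R$i$i) \<le> T" for i
  proof -
    have "T = Re (trace R)" using tr by simp
    also have "\<dots> = (\<Sum>j\<in>UNIV. Re (R$j$j))" unfolding trace_def by simp
    also have "\<dots> \<ge> Re (R$i$i)"
      by (rule member_le_sum) (use psd_entry_bound[OF h psd] in auto)
    finally show ?thesis .
  qed
  show ?thesis using psd_entry_bound(3)[OF h psd, of p q] dle[of p] dle[of q] by simp
qed

lemma gram_entry_bound:
  fixes A :: "complex^'c::finite^'r::finite" and R :: "complex^'c^'c"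
  assumes b: "\<And>p q. cmod (R$p$q) \<le> T"
  shows "cmod ((A ** R ** cadj A) $ a $ b) \<le> real CARD('c)^2 * T * lambda_max (A ** cadj A)"
proof -
  let ?L = "lambda_max (A ** cadj A)"
  have T0: "0 \<le> T" using b[of undefined undefined] norm_ge_zero order_trans by blast
  have ab: "cmod (A$a$p) * cmod (A$b$q) \<le> ?L" for p q
  proof -
    have sq: "0 \<le> (cmod (A$a$p) - cmod (A$b$q))^2" by simp
    have "cmod (A$a$p) * cmod (A$b$q) \<le> ((cmod (A$a$p))^2 + (cmod (A$b$q))^2) / 2"
      using sum_squares_bound[of "cmod (A$a$p)" "cmod (A$b$q)"] by simp
    also have "\<dots> \<le> ?L" using entry_bound[of A a p] entry_bound[of A b q] by simp
    finally show ?thesis .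
  qed
  have "(A ** R ** cadj A) $ a $ b = (\<Sum>q\<in>UNIV. \<Sum>p\<in>UNIV. A$a$p * R$p$q * cnj (A$b$q))"
    unfolding matrix_matrix_mult_def cadj_def by (simp add: sum_distrib_right)
  then have "cmod ((A ** R ** cadj A) $ a $ b) \<le> (\<Sum>q\<in>UNIV. \<Sum>p\<in>(UNIV::'c set). cmod (A$a$p * R$p$q * cnj (A$b$q)))"
    by (simp only:) (rule order_trans[OF norm_sum sum_mono[OF norm_sum]])
  also have "\<dots> \<le> (\<Sum>q\<in>(UNIV::'c set). \<Sum>p\<in>(UNIV::'c set). T * ?L)"
  proof (intro sum_mono)
    fix p q
    have "cmod (A$a$p * R$p$q * cnj (A$b$q)) = cmod (R$p$q) * (cmod (A$a$p) * cmod (A$b$q))"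
      by (simp add: norm_mult)
    also have "\<dots> \<le> T * ?L"
      using b[of p q] ab[of p q] T0 by (intro mult_mono) auto
    finally show "cmod (A$a$p * R$p$q * cnj (A$b$q)) \<le> T * ?L" .
  qed
  also have "\<dots> = real CARD('c)^2 * T * ?L" by (simp add: power2_eq_square)
  finally show ?thesis .
qed



lemma sandwich_herm:
  fixes A :: "complex^'c::finite^'r::finite" and R :: "complex^'c^'c"
  assumes h: "cadj R = R"
  shows "cadj (c *\<^sub>R (A ** R ** cadj A)) = c *\<^sub>R (A ** R ** cadj A)"
  by (simp add: cadj_scaleR cadj_mult h matrix_mul_assoc)

lemma sandwich_psd:
  fixes A :: "complex^'c::finite^'r::finite" and R :: "complex^'c^'c"
  assumes psd: "\<And>y. 0 \<le> Re (cdot y (R *v y))" and c: "0 \<le> c"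
  shows "0 \<le> Re (cdot x ((c *\<^sub>R (A ** R ** cadj A)) *v x))"
proof -
  have "cdot x ((A ** R ** cadj A) *v x) = cdot x (A *v (R *v (cadj A *v x)))"
    by (simp add: matrix_vector_mul_assoc matrix_mul_assoc)
  also have "\<dots> = cdot (cadj A *v x) (R *v (cadj A *v x))" by (rule cdot_adj)
  finally have e: "cdot x ((A ** R ** cadj A) *v x) = cdot (cadj A *v x) (R *v (cadj A *v x))" .
  show ?thesis unfolding mat_scaleR_mv cdot_scaleR_right e
    using psd[of "cadj A *v x"] c by simp
qed

lemma logdet_pos:
  fixes A :: "complex^'c::finite^'r::finite" and R :: "complex^'c^'c"
  assumes h: "cadj R = R" and psd: "\<And>y. 0 \<le> Re (cdot y (R *v y))" and c: "0 \<le> c"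
  shows "0 < Re (det (mat 1 + c *\<^sub>R (A ** R ** cadj A)))"
  by (rule det_I_plus_pos[OF sandwich_herm[OF h] sandwich_psd[OF psd c]])

lemma logdet_bound:
  fixes A :: "complex^'c::finite^'r::finite" and R :: "complex^'c^'c"
  assumes h: "cadj R = R" and psd: "\<And>y. 0 \<le> Re (cdot y (R *v y))" and c: "0 \<le> c"
    and b: "\<And>p q. cmod (R$p$q) \<le> T"
  shows "log 2 (Re (det (mat 1 + c *\<^sub>R (A ** R ** cadj A)))) \<le>
     log 2 (fact CARD('r)) + real CARD('r) * (log 2 (1 + c * (real CARD('c)^2 * T)) + log 2 (1 + lambda_max (A ** cadj A)))"
proof -
  let ?L = "lambda_max (A ** cadj A)"
  let ?K = "real CARD('c)^2 * T"
  let ?M = "mat 1 + c *\<^sub>R (A ** R ** cadj A)"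
  have T0: "0 \<le> T" using b[of undefined undefined] norm_ge_zero order_trans by blast
  have L0: "0 \<le> ?L" by (rule gram_lmax_nonneg)
  have K0: "0 \<le> c * ?K" using T0 c by simp
  have ent: "cmod (?M$i$j) \<le> 1 + c * ?K * ?L" for i j
  proof -
    have eq: "?M$i$j = (mat 1 :: complex^'r^'r)$i$j + c *\<^sub>R ((A ** R ** cadj A) $ i $ j)" by simp
    have "cmod (?M$i$j) \<le> cmod ((mat 1 :: complex^'r^'r)$i$j) + cmod (c *\<^sub>R ((A ** R ** cadj A) $ i $ j))"
      unfolding eq by (rule norm_triangle_ineq)
    also have "\<dots> \<le> 1 + c * cmod ((A ** R ** cadj A) $ i $ j)"
      using c by (simp add: mat_def)
    also have "\<dots> \<le> 1 + c * (?K * ?L)"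
      using gram_entry_bound[OF b, of A i j] c by (simp add: mult_left_mono)
    finally show ?thesis by (simp add: mult.assoc)
  qed
  have "1 + c * ?K * ?L \<le> (1 + c * ?K) * (1 + ?L)"
    using K0 L0 by (simp add: algebra_simps)
  then have ent2: "cmod (?M$i$j) \<le> (1 + c * ?K) * (1 + ?L)" for i j
    using ent[of i j] by linarith
  have pos: "0 < Re (det ?M)" by (rule logdet_pos[OF h psd c])
  have "Re (det ?M) \<le> cmod (det ?M)" by (rule complex_Re_le_cmod)
  also have "\<dots> \<le> fact CARD('r) * ((1 + c * ?K) * (1 + ?L)) ^ CARD('r)"
    by (rule det_bound[OF ent2])
  finally have le: "Re (det ?M) \<le> fact CARD('r) * ((1 + c * ?K) * (1 + ?L)) ^ CARD('r)" .
  have p1: "0 < 1 + c * ?K" using K0 by simp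
  have p2: "0 < 1 + ?L" using L0 by simp
  have "log 2 (Re (det ?M)) \<le> log 2 (fact CARD('r) * ((1 + c * ?K) * (1 + ?L)) ^ CARD('r))"
    using pos le by (intro log_mono) auto
  also have "\<dots> = log 2 (fact CARD('r)) + real CARD('r) * (log 2 (1 + c * ?K) + log 2 (1 + ?L))"
    using p1 p2 by (simp add: log_mult log_nat_power)
  finally show ?thesis .
qed



lemma cont_gram_norm: "continuous_on UNIV (\<lambda>A::complex^'c::finite^'r::finite. (norm (cadj A *v x))^2)"
  unfolding cadj_def matrix_vector_mult_def by (intro continuous_intros)

lemma lmax_gram_measurable:
  "(\<lambda>A::complex^'c::finite^'r::finite. lambda_max (A ** cadj A)) \<in> borel_measurable borel"
  unfolding borel_measurable_iff_greater
proof
  fix a :: real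
  have eq: "{A::complex^'c^'r. a < lambda_max (A ** cadj A)} =
            (\<Union>x\<in>{x. x \<noteq> 0}. {A. a * (norm x)^2 < (norm (cadj A *v x))^2})"
  proof (intro set_eqI iffI)
    fix A assume "A \<in> {A::complex^'c^'r. a < lambda_max (A ** cadj A)}"
    then have al: "a < lambda_max (A ** cadj A)" by simp
    obtain v where v: "v \<noteq> 0" "(norm (cadj A *v v))^2 = lambda_max (A ** cadj A) * (norm v)^2"
      using gram_lmax[of A] by blast
    have "a * (norm v)^2 < lambda_max (A ** cadj A) * (norm v)^2"
      using al v(1) by (intro mult_strict_right_mono) auto
    then show "A \<in> (\<Union>x\<in>{x. x \<noteq> 0}. {A. a * (norm x)^2 < (norm (cadj A *v x))^2})"
      using v by auto
  next
    fix A assume "A \<in> (\<Union>x\<in>{x. x \<noteq> 0}. {A::complex^'c^'r. a * (norm x)^2 < (norm (cadj A *v x))^2})"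
    then obtain x where x: "x \<noteq> 0" "a * (norm x)^2 < (norm (cadj A *v x))^2" by blast
    then have "a * (norm x)^2 < lambda_max (A ** cadj A) * (norm x)^2"
      using gram_lmax[of A] by (meson less_le_trans)
    then show "A \<in> {A::complex^'c^'r. a < lambda_max (A ** cadj A)}"
      using x(1) by (simp add: mult_less_cancel_right)
  qed
  have "open {A::complex^'c^'r. a < lambda_max (A ** cadj A)}"
    unfolding eq
    by (intro open_UN ballI open_Collect_less continuous_on_const cont_gram_norm)
  then have "{A::complex^'c^'r. a < lambda_max (A ** cadj A)} \<in> sets borel" by (rule borel_open)
  then show "{w \<in> space borel. a < lambda_max (w ** cadj (w::complex^'c^'r))} \<in> sets borel"
    by simp
qed

definition trset :: "nat \<Rightarrow> (complex^'c::finite^'c) set" where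
  "trset N = {R. psd_herm R \<and> trace R = of_nat N}"

lemma trset_props:
  assumes "R \<in> trset N"
  shows "cadj R = R" "\<And>y. 0 \<le> Re (cdot y (R *v y))" "\<And>p q. cmod (R$p$q) \<le> real N"
proof -
  show h: "cadj R = R" using assms unfolding trset_def psd_herm_def by auto
  show psd: "\<And>y. 0 \<le> Re (cdot y (R *v y))" using assms unfolding trset_def psd_herm_def cdot_def by auto
  have "trace R = of_real (real N)" using assms unfolding trset_def by simp
  then show "\<And>p q. cmod (R$p$q) \<le> real N" using psd_trace_entry_bound[OF h psd] by blast
qed

lemma trset_nonempty: "(mat 1 :: complex^'c::finite^'c) \<in> trset CARD('c)"
proof -
  have "Re (\<Sum>i\<in>UNIV. cnj (x$i) * ((mat 1::complex^'c^'c) *v x)$i) \<ge> 0" for x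
    using Re_cdot_self[of x] unfolding cdot_def by simp
  moreover have "trace (mat 1 :: complex^'c^'c) = of_nat CARD('c)"
    by (simp add: trace_def mat_def)
  ultimately show ?thesis unfolding trset_def psd_herm_def by simp
qed

lemma logdet_bound_trset:
  fixes Z :: "complex^'c::finite^'r::finite"
  assumes "R \<in> trset N" "0 \<le> c"
  shows "log 2 (Re (det (mat 1 + c *\<^sub>R (Z ** R ** cadj Z)))) \<le>
     log 2 (fact CARD('r)) + real CARD('r) * (log 2 (1 + c * (real CARD('c)^2 * real N)) + log 2 (1 + lambda_max (Z ** cadj Z)))"
  by (rule logdet_bound[OF trset_props(1,2)[OF assms(1)] assms(2) trset_props(3)[OF assms(1)]])

definition gsup :: "real \<Rightarrow> nat \<Rightarrow> complex^'c::finite^'r::finite \<Rightarrow> real" where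
  "gsup c N Z = (SUP R \<in> (trset N :: (complex^'c^'c) set). log 2 (Re (det (mat 1 + c *\<^sub>R (Z ** R ** cadj Z)))))"

lemma logdet_pos_trset:
  fixes Z :: "complex^'c::finite^'r::finite"
  assumes "R \<in> trset N" "0 \<le> c"
  shows "0 < Re (det (mat 1 + c *\<^sub>R (Z ** R ** cadj Z)))"
  by (rule logdet_pos[OF trset_props(1,2)[OF assms(1)] assms(2)])

lemma gsup_bdd:
  assumes "0 \<le> c"
  shows "bdd_above ((\<lambda>R. log 2 (Re (det (mat 1 + c *\<^sub>R (Z ** R ** cadj Z))))) ` (trset N :: (complex^'c::finite^'c) set))"
  using logdet_bound_trset[OF _ assms, of _ N Z]
  by (intro bdd_aboveI2) blast

lemma gsup_le:
  fixes Z :: "complex^'c::finite^'r::finite"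
  assumes "0 \<le> c" and ne: "trset N \<noteq> ({} :: (complex^'c^'c) set)"
  shows "gsup c N Z \<le> log 2 (fact CARD('r)) + real CARD('r) * (log 2 (1 + c * (real CARD('c)^2 * real N)) + log 2 (1 + lambda_max (Z ** cadj Z)))"
  unfolding gsup_def
  using logdet_bound_trset[OF _ assms(1), of _ N Z]
  by (intro cSUP_least ne) blast

lemma cont_det_sandwich:
  "continuous_on UNIV (\<lambda>Z::complex^'c::finite^'r::finite. Re (det (mat 1 + c *\<^sub>R (Z ** R ** cadj Z))))"
  unfolding det_def matrix_matrix_mult_def cadj_def by (intro continuous_intros)

lemma gsup_measurable:
  assumes c: "0 \<le> c" and ne: "trset N \<noteq> ({} :: (complex^'c::finite^'c) set)"
  shows "(gsup c N :: complex^'c^'r::finite \<Rightarrow> real) \<in> borel_measurable borel"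
  unfolding borel_measurable_iff_greater
proof
  fix a :: real
  have eq: "{Z::complex^'c^'r. a < gsup c N Z} =
     (\<Union>R\<in>(trset N :: (complex^'c^'c) set). {Z. 2 powr a < Re (det (mat 1 + c *\<^sub>R (Z ** R ** cadj Z)))})"
  proof -
    have "a < gsup c N Z \<longleftrightarrow> (\<exists>R\<in>(trset N :: (complex^'c^'c) set). 2 powr a < Re (det (mat 1 + c *\<^sub>R (Z ** R ** cadj Z))))"
      for Z :: "complex^'c^'r"
    proof -
      have "a < gsup c N Z \<longleftrightarrow> (\<exists>R\<in>(trset N :: (complex^'c^'c) set). a < log 2 (Re (det (mat 1 + c *\<^sub>R (Z ** R ** cadj Z)))))"
        unfolding gsup_def using less_cSUP_iff[OF ne gsup_bdd[OF c]] by blast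
      also have "\<dots> \<longleftrightarrow> (\<exists>R\<in>(trset N :: (complex^'c^'c) set). 2 powr a < Re (det (mat 1 + c *\<^sub>R (Z ** R ** cadj Z))))"
        by (intro bex_cong refl less_log_iff) (auto intro: logdet_pos_trset c)
      finally show ?thesis .
    qed
    then show ?thesis by blast
  qed
  have "open {Z::complex^'c^'r. a < gsup c N Z}"
    unfolding eq
    by (intro open_UN ballI open_Collect_less continuous_on_const cont_det_sandwich)
  then have "{Z::complex^'c^'r. a < gsup c N Z} \<in> sets borel" by (rule borel_open)
  then show "{w \<in> space borel. a < gsup c N (w::complex^'c^'r)} \<in> sets borel" by simp
qed

lemma block_diag_sum:
  "block_diag H = (\<Sum>k\<in>UNIV. (\<chi> ri tj. if snd ri = k \<and> snd tj = k then H k $ fst ri $ fst tj else 0))"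
  unfolding block_diag_def
  by (simp add: vec_eq_iff, intro allI, subst sum_single, auto)

lemma cont_embed:
  "continuous_on UNIV (\<lambda>A::complex^'t::finite^'r::finite. (\<chi> (ri::'r \<times> 'n::finite) (tj::'t \<times> 'n). if snd ri = k \<and> snd tj = k then A $ fst ri $ fst tj else 0))"
proof (intro continuous_on_vec_lambda)
  fix ri :: "'r \<times> 'n" and tj :: "'t \<times> 'n"
  show "continuous_on UNIV (\<lambda>A::complex^'t^'r. if snd ri = k \<and> snd tj = k then A $ fst ri $ fst tj else 0)"
    by (cases "snd ri = k \<and> snd tj = k") (auto intro!: continuous_intros)
qed

lemma block_diag_measurable:
  fixes H :: "'a \<Rightarrow> 'n::finite \<Rightarrow> complex^'t::finite^'r::finite"
  assumes "\<And>i. (\<lambda>\<omega>. H \<omega> i) \<in> borel_measurable M"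
  shows "(\<lambda>\<omega>. block_diag (H \<omega>)) \<in> borel_measurable M"
  unfolding block_diag_sum
  by (intro borel_measurable_sum borel_measurable_continuous_on[OF cont_embed] assms)



lemma light_tail_from_bound:
  assumes P: "prob_space M"
    and Xm: "X \<in> borel_measurable M" and Lm: "L \<in> borel_measurable M"
    and L0: "\<And>\<omega>. 0 \<le> L \<omega>" and th: "0 < \<theta>"
    and fin: "(\<integral>\<^sup>+ \<omega>. ennreal ((1 + L \<omega>) powr \<theta>) \<partial>M) < \<infinity>"
    and be: "0 < \<beta>" and bd: "\<And>\<omega>. \<omega> \<in> space M \<Longrightarrow> X \<omega> \<le> \<alpha> + \<beta> * ln (1 + L \<omega>)"
  shows "light_tailed M X"
proof -
  interpret prob_space M by (rule P)
  define g where "g \<omega> = (1 + L \<omega>) powr \<theta>" for \<omega>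
  have gm: "g \<in> borel_measurable M" unfolding g_def using Lm by measurable
  have g0: "0 \<le> g \<omega>" for \<omega> unfolding g_def by simp
  have gi: "integrable M g"
    by (rule integrableI_nonneg[OF gm]) (use g0 fin in \<open>auto simp: g_def\<close>)
  define E where "E = (\<integral>\<omega>. g \<omega> \<partial>M)"
  define K where "K = E * exp (\<theta> * \<alpha> / \<beta>)"
  have key: "measure M {\<omega> \<in> space M. X \<omega> > x} \<le> K * exp (- (\<theta> / \<beta>) * x)" for x
  proof -
    define s where "s = exp (\<theta> * (x - \<alpha>) / \<beta>)"
    have s0: "0 < s" unfolding s_def by simp
    have sub: "{\<omega> \<in> space M. X \<omega> > x} \<subseteq> {\<omega> \<in> space M. g \<omega> \<ge> s}"
    proof safe
      fix \<omega> assume w: "\<omega> \<in> space M" "x < X \<omega>"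
      then have "x < \<alpha> + \<beta> * ln (1 + L \<omega>)" using bd[OF w(1)] by simp
      then have "(x - \<alpha>) / \<beta> < ln (1 + L \<omega>)" using be by (simp add: field_simps)
      then have "\<theta> * ((x - \<alpha>) / \<beta>) \<le> \<theta> * ln (1 + L \<omega>)" using th
        by (intro mult_left_mono) auto
      then have "s \<le> exp (\<theta> * ln (1 + L \<omega>))" unfolding s_def by (simp add: times_divide_eq_right)
      also have "\<dots> = g \<omega>" unfolding g_def powr_def using L0[of \<omega>]
        by (simp add: mult.commute)
      finally show "s \<le> g \<omega>" .
    qed
    have "measure M {\<omega> \<in> space M. X \<omega> > x} \<le> measure M {\<omega> \<in> space M. g \<omega> \<ge> s}"
      using sub gm by (intro finite_measure_mono) auto
    also have "\<dots> \<le> E / s"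
      unfolding E_def using gi g0 s0 by (intro integral_Markov_inequality_measure[where A="space M"]) auto
    also have "\<dots> = K * exp (- (\<theta> / \<beta>) * x)"
    proof -
      have "exp (\<theta> * (x - \<alpha>) / \<beta>) * exp (- (\<theta> / \<beta>) * x) = exp (- (\<theta> * \<alpha> / \<beta>))"
        unfolding exp_add[symmetric] using be by (simp add: field_simps)
      then have "exp (\<theta> * (x - \<alpha>) / \<beta>) * (exp (\<theta> * \<alpha> / \<beta>) * exp (- (\<theta> / \<beta>) * x)) = 1"
        by (simp add: exp_minus field_simps)
      then show ?thesis unfolding K_def s_def by (simp add: field_simps)
    qed
    finally show ?thesis .
  qed
  have "(\<lambda>x. measure M {\<omega> \<in> space M. X \<omega> > x}) \<in> O[at_top](\<lambda>x. exp (- (\<theta> / \<beta>) * x))"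
    using key by (intro bigoI[where c=K] always_eventually) simp
  moreover have "0 < \<theta> / \<beta>" using th be by simp
  ultimately show ?thesis unfolding light_tailed_def using Xm by blast
qed



theorem theorem2:
  fixes M :: "'a measure"
    and H :: "'a \<Rightarrow> 'n::finite \<Rightarrow> complex^'t::finite^'r::finite"
    and W \<rho> :: real
  assumes "prob_space M"
    and "\<And>i. (\<lambda>\<omega>. H \<omega> i) \<in> borel_measurable M"
    and "W > 0" and "\<rho> > 0"
  shows "((\<forall>i. \<exists>\<theta>>0. (\<integral>\<^sup>+ \<omega>. ennreal ((1 + lambda_max (H \<omega> i ** cadj (H \<omega> i))) powr \<theta>) \<partial>M) < \<infinity>)
           \<longleftrightarrow> (\<exists>\<theta>>0. (\<integral>\<^sup>+ \<omega>. ennreal ((1 + lambda_max (block_diag (H \<omega>) ** cadj (block_diag (H \<omega>)))) powr \<theta>) \<partial>M) < \<infinity>))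
       \<and> ((\<exists>\<theta>>0. (\<integral>\<^sup>+ \<omega>. ennreal ((1 + lambda_max (block_diag (H \<omega>) ** cadj (block_diag (H \<omega>)))) powr \<theta>) \<partial>M) < \<infinity>)
           \<longrightarrow> light_tailed M (\<lambda>\<omega>. cap_known W \<rho> (H \<omega>)) \<and> light_tailed M (\<lambda>\<omega>. cap_unknown W \<rho> (H \<omega>)))"
proof -
  note P = assms(1)
  interpret prob_space M by (rule P)
  define c where "c = \<rho> / real CARD('t)"
  have c0: "0 \<le> c" unfolding c_def using assms(4) by simp
  define lB where "lB \<omega> = lambda_max (block_diag (H \<omega>) ** cadj (block_diag (H \<omega>)))" for \<omega>
  define li where "li \<omega> i = lambda_max (H \<omega> i ** cadj (H \<omega> i))" for \<omega> i
  have lim[measurable]: "(\<lambda>\<omega>. li \<omega> i) \<in> borel_measurable M" for i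
    using measurable_comp[OF assms(2)[of i] lmax_gram_measurable] unfolding li_def comp_def .
  have lBm[measurable]: "lB \<in> borel_measurable M"
    using measurable_comp[OF block_diag_measurable[OF assms(2)] lmax_gram_measurable]
    unfolding lB_def comp_def .
  have li0: "0 \<le> li \<omega> i" for \<omega> i unfolding li_def by (rule gram_lmax_nonneg)
  have lB0: "0 \<le> lB \<omega>" for \<omega> unfolding lB_def by (rule gram_lmax_nonneg)
  have ge: "li \<omega> i \<le> lB \<omega>" for \<omega> i unfolding li_def lB_def by (rule lmax_block_ge)
  have le: "\<exists>k. lB \<omega> \<le> li \<omega> k" for \<omega> unfolding li_def lB_def by (rule lmax_block_le)

  have eqv: "(\<forall>i. \<exists>\<theta>>0. (\<integral>\<^sup>+ \<omega>. ennreal ((1 + li \<omega> i) powr \<theta>) \<partial>M) < \<infinity>)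
           \<longleftrightarrow> (\<exists>\<theta>>0. (\<integral>\<^sup>+ \<omega>. ennreal ((1 + lB \<omega>) powr \<theta>) \<partial>M) < \<infinity>)"
  proof
    assume "\<forall>i. \<exists>\<theta>>0. (\<integral>\<^sup>+ \<omega>. ennreal ((1 + li \<omega> i) powr \<theta>) \<partial>M) < \<infinity>"
    then obtain tf where tf: "\<And>i. tf i > 0" "\<And>i. (\<integral>\<^sup>+ \<omega>. ennreal ((1 + li \<omega> i) powr tf i) \<partial>M) < \<infinity>"
      by metis
    define \<theta> where "\<theta> = Min (range tf)"
    have th0: "\<theta> > 0" unfolding \<theta>_def using tf(1) by (subst Min_gr_iff) auto
    have thle: "\<theta> \<le> tf i" for i unfolding \<theta>_def by (rule Min_le) auto
    have pw: "(1 + lB \<omega>) powr \<theta> \<le> (\<Sum>i\<in>UNIV. (1 + li \<omega> i) powr \<theta>)" for \<omega>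
    proof -
      obtain k where k: "lB \<omega> \<le> li \<omega> k" using le by blast
      have "(1 + lB \<omega>) powr \<theta> \<le> (1 + li \<omega> k) powr \<theta>"
        using k lB0[of \<omega>] th0 by (intro powr_mono2) auto
      also have "\<dots> \<le> (\<Sum>i\<in>UNIV. (1 + li \<omega> i) powr \<theta>)"
        by (rule member_le_sum) auto
      finally show ?thesis .
    qed
    have each: "(\<integral>\<^sup>+ \<omega>. ennreal ((1 + li \<omega> i) powr \<theta>) \<partial>M) < \<infinity>" for i
    proof -
      have "(\<integral>\<^sup>+ \<omega>. ennreal ((1 + li \<omega> i) powr \<theta>) \<partial>M) \<le> (\<integral>\<^sup>+ \<omega>. ennreal ((1 + li \<omega> i) powr tf i) \<partial>M)"
        using li0 thle by (intro nn_integral_mono ennreal_leI powr_mono) auto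
      then show ?thesis using tf(2)[of i] by (meson le_less_trans)
    qed
    have "(\<integral>\<^sup>+ \<omega>. ennreal ((1 + lB \<omega>) powr \<theta>) \<partial>M) \<le> (\<integral>\<^sup>+ \<omega>. (\<Sum>i\<in>UNIV. ennreal ((1 + li \<omega> i) powr \<theta>)) \<partial>M)"
      using pw by (intro nn_integral_mono) (simp add: ennreal_leI)
    also have "\<dots> = (\<Sum>i\<in>UNIV. (\<integral>\<^sup>+ \<omega>. ennreal ((1 + li \<omega> i) powr \<theta>) \<partial>M))"
      by (rule nn_integral_sum) measurable
    also have "\<dots> < \<infinity>" using each by (simp add: less_top)
    finally show "\<exists>\<theta>>0. (\<integral>\<^sup>+ \<omega>. ennreal ((1 + lB \<omega>) powr \<theta>) \<partial>M) < \<infinity>" using th0 by blast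
  next
    assume "\<exists>\<theta>>0. (\<integral>\<^sup>+ \<omega>. ennreal ((1 + lB \<omega>) powr \<theta>) \<partial>M) < \<infinity>"
    then obtain \<theta> where th: "\<theta> > 0" "(\<integral>\<^sup>+ \<omega>. ennreal ((1 + lB \<omega>) powr \<theta>) \<partial>M) < \<infinity>" by blast
    show "\<forall>i. \<exists>\<theta>>0. (\<integral>\<^sup>+ \<omega>. ennreal ((1 + li \<omega> i) powr \<theta>) \<partial>M) < \<infinity>"
    proof
      fix i
      have "(\<integral>\<^sup>+ \<omega>. ennreal ((1 + li \<omega> i) powr \<theta>) \<partial>M) \<le> (\<integral>\<^sup>+ \<omega>. ennreal ((1 + lB \<omega>) powr \<theta>) \<partial>M)"
        using li0 ge th(1) by (intro nn_integral_mono ennreal_leI powr_mono2) (auto simp: add_nonneg_nonneg)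
      then show "\<exists>\<theta>>0. (\<integral>\<^sup>+ \<omega>. ennreal ((1 + li \<omega> i) powr \<theta>) \<partial>M) < \<infinity>"
        using th by (meson le_less_trans)
    qed
  qed

  have tails: "light_tailed M (\<lambda>\<omega>. cap_known W \<rho> (H \<omega>)) \<and> light_tailed M (\<lambda>\<omega>. cap_unknown W \<rho> (H \<omega>))"
    if fin0: "\<exists>\<theta>>0. (\<integral>\<^sup>+ \<omega>. ennreal ((1 + lB \<omega>) powr \<theta>) \<partial>M) < \<infinity>"
  proof -
    obtain \<theta> where th: "\<theta> > 0" "(\<integral>\<^sup>+ \<omega>. ennreal ((1 + lB \<omega>) powr \<theta>) \<partial>M) < \<infinity>" using fin0 by blast
    define NN where "NN = CARD('t) * CARD('n)"
    have ne: "trset NN \<noteq> ({} :: (complex^('t \<times> 'n)^('t \<times> 'n)) set)"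
      using trset_nonempty[where 'c="'t \<times> 'n"] unfolding NN_def by (auto simp: card_prod)
    have ck: "cap_known W \<rho> (H \<omega>) = W / real CARD('n) * gsup c NN (block_diag (H \<omega>))" for \<omega>
      unfolding cap_known_def gsup_def trset_def c_def NN_def by simp
    have gm[measurable]: "(\<lambda>\<omega>. gsup c NN (block_diag (H \<omega>)) :: real) \<in> borel_measurable M"
      using measurable_comp[OF block_diag_measurable[OF assms(2)] gsup_measurable[OF c0 ne]]
      unfolding comp_def .
    have ckm: "(\<lambda>\<omega>. cap_known W \<rho> (H \<omega>)) \<in> borel_measurable M"
      unfolding ck by measurable
    define r1 where "r1 = real CARD('r \<times> 'n)"
    define a1 where "a1 = log 2 (fact CARD('r \<times> 'n)) + r1 * log 2 (1 + c * (real CARD('t \<times> 'n)^2 * real NN))"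
    have r1p: "0 < r1" unfolding r1_def by simp
    have ckb: "cap_known W \<rho> (H \<omega>) \<le> W / real CARD('n) * a1 + (W / real CARD('n) * r1 / ln 2) * ln (1 + lB \<omega>)" for \<omega>
    proof -
      have "gsup c NN (block_diag (H \<omega>)) \<le> a1 + r1 * log 2 (1 + lB \<omega>)"
        using gsup_le[OF c0 ne, of "block_diag (H \<omega>)"] unfolding a1_def r1_def lB_def
        by (simp add: algebra_simps)
      then have "W / real CARD('n) * gsup c NN (block_diag (H \<omega>)) \<le> W / real CARD('n) * (a1 + r1 * log 2 (1 + lB \<omega>))"
        using assms(3) by (intro mult_left_mono) auto
      then show ?thesis unfolding ck log_def by (simp add: algebra_simps)
    qed
    have LT1: "light_tailed M (\<lambda>\<omega>. cap_known W \<rho> (H \<omega>))"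
      by (rule light_tail_from_bound[OF P ckm lBm lB0 th(1) th(2), of "W / real CARD('n) * r1 / ln 2" "W / real CARD('n) * a1"])
        (use assms(3) r1p ckb in simp_all)
    have I: "cadj (mat 1 :: complex^'t^'t) = mat 1" by simp
    have Ipsd: "0 \<le> Re (cdot y ((mat 1 :: complex^'t^'t) *v y))" for y
      using Re_cdot_self[of y] by simp
    have Ib: "cmod ((mat 1 :: complex^'t^'t) $ p $ q) \<le> 1" for p q by (simp add: mat_def)
    define f where "f A = Re (det (mat 1 + c *\<^sub>R (A ** cadj A)))" for A :: "complex^'t^'r"
    have fc: "continuous_on UNIV f"
      using cont_det_sandwich[of c "mat 1 :: complex^'t^'t"] unfolding f_def by (simp add: matrix_mul_rid)
    have fm[measurable]: "(\<lambda>\<omega>. f (H \<omega> i)) \<in> borel_measurable M" for i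
      by (rule borel_measurable_continuous_on[OF fc assms(2)])
    have cu: "cap_unknown W \<rho> (H \<omega>) = W / real CARD('n) * (\<Sum>i\<in>UNIV. log 2 (f (H \<omega> i)))" for \<omega>
      unfolding cap_unknown_def f_def c_def by simp
    have cum: "(\<lambda>\<omega>. cap_unknown W \<rho> (H \<omega>)) \<in> borel_measurable M"
      unfolding cu by measurable
    define r2 where "r2 = real CARD('r)"
    define a2 where "a2 = log 2 (fact CARD('r)) + r2 * log 2 (1 + c * (real CARD('t)^2 * 1))"
    have r2p: "0 < r2" unfolding r2_def by simp
    have trm: "log 2 (f (H \<omega> i)) \<le> a2 + r2 * log 2 (1 + lB \<omega>)" for \<omega> i
    proof -
      have "log 2 (f (H \<omega> i)) \<le> a2 + r2 * log 2 (1 + li \<omega> i)"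
        using logdet_bound[OF I Ipsd c0 Ib, of "H \<omega> i"] unfolding f_def a2_def r2_def li_def
        by (simp add: matrix_mul_rid algebra_simps)
      also have "\<dots> \<le> a2 + r2 * log 2 (1 + lB \<omega>)"
        using ge[of \<omega> i] li0[of \<omega> i] r2p by (intro add_left_mono mult_left_mono log_mono) auto
      finally show ?thesis .
    qed
    have cub: "cap_unknown W \<rho> (H \<omega>) \<le> W * a2 + (W * r2 / ln 2) * ln (1 + lB \<omega>)" for \<omega>
    proof -
      have "(\<Sum>i\<in>UNIV. log 2 (f (H \<omega> i))) \<le> (\<Sum>i\<in>(UNIV::'n set). a2 + r2 * log 2 (1 + lB \<omega>))"
        by (intro sum_mono trm)
      also have "\<dots> = real CARD('n) * (a2 + r2 * log 2 (1 + lB \<omega>))" by simp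
      finally have "W / real CARD('n) * (\<Sum>i\<in>UNIV. log 2 (f (H \<omega> i))) \<le> W / real CARD('n) * (real CARD('n) * (a2 + r2 * log 2 (1 + lB \<omega>)))"
        using assms(3) by (intro mult_left_mono) auto
      then show ?thesis unfolding cu log_def by (simp add: algebra_simps)
    qed
    have LT2: "light_tailed M (\<lambda>\<omega>. cap_unknown W \<rho> (H \<omega>))"
      by (rule light_tail_from_bound[OF P cum lBm lB0 th(1) th(2), of "W * r2 / ln 2" "W * a2"])
        (use assms(3) r2p cub in simp_all)
    show ?thesis using LT1 LT2 by blast
  qed
  show ?thesis using eqv tails unfolding li_def lB_def by blast
qed


end
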